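(* Let $S$ and $T$ be strings and let $(s_1,\dots,s_k)$ be a maximal block decomposition of $S$ with respect to $T$. Then any fragment of $S$ that occurs in $T$ is contained in at most three consecutive blocks $s_i$. Furthermore, any occurrence in $S$ of a longest common substring of $S$ and $T$ contains the first letter of some block.
   Context: A block decomposition of $S$ with respect to $T$ is a sequence of strings $(s_1,\dots,s_k)$ with $S=s_1s_2\cdots s_k$ such that every $s_i$ is a substring of $T$ (the $s_i$ are called blocks, and each corresponds to a fragment of $S$ in the obvious way). It is maximal if $s_is_{i+1}$ is not a substring of $T$ for every $i\in\{1,\dots,k-1\}$. A fragment of $S$ is a contiguous substring $S[i..j]$ at specified positions. A longest common substring of $S$ and $T$ is a longest string that is a substring of both. *)

theory Defs
  imports Main "HOL-Library.Sublist"
begin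

text \<open>Strings are lists; "substring" is contiguous sublist (HOL-Library.Sublist.sublist).\<close>

definition block_decomp :: "'a list list \<Rightarrow> 'a list \<Rightarrow> 'a list \<Rightarrow> bool" where
  "block_decomp bs S T \<longleftrightarrow> concat bs = S \<and> (\<forall>b \<in> set bs. sublist b T)"

definition maximal_block_decomp :: "'a list list \<Rightarrow> 'a list \<Rightarrow> 'a list \<Rightarrow> bool" where
  "maximal_block_decomp bs S T \<longleftrightarrow> block_decomp bs S T \<and>
     (\<forall>i. Suc i < length bs \<longrightarrow> \<not> sublist (bs ! i @ bs ! Suc i) T)"

text \<open>Start position (0-based) of block m in S; block m occupies positions
  [block_start bs m, block_start bs (Suc m)).\<close>
definition block_start :: "'a list list \<Rightarrow> nat \<Rightarrow> nat" where
  "block_start bs m = length (concat (take m bs))"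

text \<open>Fragment of S with positions [i, j) (half-open, 0-based).\<close>
definition fragment :: "'a list \<Rightarrow> nat \<Rightarrow> nat \<Rightarrow> 'a list" where
  "fragment S i j = take (j - i) (drop i S)"

definition is_lcs :: "'a list \<Rightarrow> 'a list \<Rightarrow> 'a list \<Rightarrow> bool" where
  "is_lcs u S T \<longleftrightarrow> sublist u S \<and> sublist u T \<and>
     (\<forall>v. sublist v S \<and> sublist v T \<longrightarrow> length v \<le> length u)"

end

theory Submission
  imports Defs
begin

lemma frag_split:
  assumes "i \<le> m" "m \<le> j"
  shows "fragment S i j = fragment S i m @ fragment S m j"
proof -
  have "j - i = (m - i) + (j - m)" using assms by simp
  then show ?thesis unfolding fragment_def
    by (metis take_add drop_drop assms(1) le_add_diff_inverse2)
qed

lemma frag_sub: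
  assumes "i \<le> i'" "i' \<le> j'" "j' \<le> j"
  shows "sublist (fragment S i' j') (fragment S i j)"
proof -
  have "fragment S i j = fragment S i i' @ fragment S i' j' @ fragment S j' j"
    using frag_split[of i i' j S] frag_split[of i' j' j S] assms by simp
  then show ?thesis by (metis sublist_appendI)
qed

lemma frag_sublist_S: "sublist (fragment S i j) S"
  unfolding fragment_def
  by (metis append_take_drop_id sublist_appendI)

lemma frag_len: "j \<le> length S \<Longrightarrow> length (fragment S i j) = j - i"
  unfolding fragment_def by simp

lemma bst_Suc:
  assumes "a < length bs"
  shows "block_start bs (Suc a) = block_start bs a + length (bs ! a)"
  unfolding block_start_def using assms by (simp add: take_Suc_conv_app_nth)

lemma bst_mono:
  assumes "m \<le> n"
  shows "block_start bs m \<le> block_start bs n"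
proof -
  have "take n bs = take m bs @ take (n - m) (drop m bs)"
    using assms by (metis le_add_diff_inverse take_add)
  then show ?thesis unfolding block_start_def by simp
qed

lemma bst_len: "block_start bs (length bs) = length (concat bs)"
  unfolding block_start_def by simp

lemma bst_0: "block_start bs 0 = 0"
  unfolding block_start_def by simp

lemma frag_block:
  assumes "a < length bs"
  shows "fragment (concat bs) (block_start bs a) (block_start bs (Suc a)) = bs ! a"
proof -
  have "concat bs = concat (take a bs) @ bs ! a @ concat (drop (Suc a) bs)"
    using assms by (metis append_take_drop_id concat_append concat.simps(2) Cons_nth_drop_Suc)
  then show ?thesis unfolding fragment_def block_start_def
    using assms by (simp add: take_Suc_conv_app_nth)
qed

lemma find_block:
  assumes "p < block_start bs (length bs)"
  shows "\<exists>a < length bs. block_start bs a \<le> p \<and> p < block_start bs (Suc a)"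
proof -
  define A where "A = {a. a < length bs \<and> block_start bs a \<le> p}"
  have "0 \<in> A" using assms by (auto simp: A_def bst_0 intro: Nat.gr0I)
  moreover have "finite A" by (auto simp: A_def)
  ultimately have mA: "Max A \<in> A" using Max_in by blast
  define a where "a = Max A"
  have "p < block_start bs (Suc a)"
  proof (cases "Suc a < length bs")
    case True
    then show ?thesis using \<open>finite A\<close> a_def
      by (metis (no_types, lifting) A_def Max_ge Suc_n_not_le_n mem_Collect_eq not_le)
  next
    case False
    then have "Suc a = length bs" using mA a_def A_def by auto
    then show ?thesis using assms by simp
  qed
  then show ?thesis using mA a_def A_def by auto
qed

theorem lemma4:
  fixes S T :: "'a list" and bs :: "'a list list"
  assumes "maximal_block_decomp bs S T" and "S \<noteq> []"
  shows "(\<forall>i j. i \<le> j \<and> j \<le> length S \<and> sublist (fragment S i j) T \<longrightarrow>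
            (\<exists>a b. a \<le> b \<and> b < length bs \<and> b \<le> a + 2 \<and>
                   block_start bs a \<le> i \<and> j \<le> block_start bs (Suc b)))
       \<and> (\<forall>u i. is_lcs u S T \<and> i + length u \<le> length S \<and> fragment S i (i + length u) = u \<longrightarrow>
            (\<exists>m < length bs. bs ! m \<noteq> [] \<and>
                 i \<le> block_start bs m \<and> block_start bs m < i + length u))"
proof -
  let ?k = "length bs"
  let ?b = "block_start bs"
  have S: "S = concat bs" and blk: "\<And>b. b \<in> set bs \<Longrightarrow> sublist b T"
    and mx: "\<And>i. Suc i < ?k \<Longrightarrow> \<not> sublist (bs ! i @ bs ! Suc i) T"
    using assms(1) unfolding maximal_block_decomp_def block_decomp_def by auto
  have kpos: "?k > 0" using assms(2) S by (cases bs) auto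
  have ne: "bs ! m \<noteq> []" if "m < ?k" for m
  proof (cases "?k = 1")
    case True
    then have "bs = [bs ! 0]" by (metis One_nat_def length_0_conv length_Suc_conv nth_Cons_0)
    then have "S = bs ! 0" using S by (metis append_Nil2 concat.simps)
    then show ?thesis using assms(2) that True by simp
  next
    case False
    show ?thesis
    proof
      assume e: "bs ! m = []"
      show False
      proof (cases "Suc m < ?k")
        case True
        then show False using mx[of m] e blk[of "bs ! Suc m"] by simp
      next
        case False
        then have "m > 0" "Suc (m - 1) < ?k" using \<open>?k \<noteq> 1\<close> that by auto
        then show False using mx[of "m - 1"] e blk[of "bs ! (m - 1)"] by simp
      qed
    qed
  qed
  have bS: "?b ?k = length S" using S bst_len by simp
  have bstrict: "?b a < ?b (Suc a)" if "a < ?k" for a using bst_Suc[OF that] ne[OF that] by simp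
  have part1: "\<exists>a b. a \<le> b \<and> b < ?k \<and> b \<le> a + 2 \<and> ?b a \<le> i \<and> j \<le> ?b (Suc b)"
    if ij: "i \<le> j" "j \<le> length S" "sublist (fragment S i j) T" for i j
  proof (cases "i = j")
    case True
    show ?thesis
    proof (cases "i < length S")
      case True
      then obtain a where "a < ?k" "?b a \<le> i" "i < ?b (Suc a)" using find_block[of i bs] bS by auto
      then show ?thesis using \<open>i = j\<close> by (intro exI[of _ a]) auto
    next
      case False
      then have "i = length S" using ij by simp
      moreover have "?b (?k - 1) \<le> length S" using bst_mono[of "?k - 1" ?k bs] bS by simp
      ultimately show ?thesis using \<open>i = j\<close> kpos bS
        by (intro exI[of _ "?k - 1"]) auto
    qed
  next
    case False
    then have ilt: "i < length S" "j - 1 < length S" using ij by auto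
    obtain a where a: "a < ?k" "?b a \<le> i" "i < ?b (Suc a)" using find_block[of i bs] bS ilt by auto
    obtain b where b: "b < ?k" "?b b \<le> j - 1" "j - 1 < ?b (Suc b)"
      using find_block[of "j - 1" bs] bS ilt by auto
    have ab: "a \<le> b"
    proof (rule ccontr)
      assume "\<not> a \<le> b"
      then have "?b (Suc b) \<le> ?b a" using bst_mono[of "Suc b" a bs] by simp
      then show False using a b \<open>i \<le> j\<close> False by linarith
    qed
    have b2: "b \<le> a + 2"
    proof (rule ccontr)
      assume "\<not> b \<le> a + 2"
      then have h: "a + 3 \<le> b" by simp
      have "?b (a + 3) \<le> ?b b" using bst_mono[OF h] .
      then have le3: "?b (Suc (Suc (Suc a))) \<le> j" using b by (simp add: numeral_3_eq_3)
      have le1: "i \<le> ?b (Suc a)" using a by simp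
      have m12: "?b (Suc a) \<le> ?b (Suc (Suc a))" "?b (Suc (Suc a)) \<le> ?b (Suc (Suc (Suc a)))"
        by (auto intro: bst_mono)
      have "fragment S (?b (Suc a)) (?b (Suc (Suc (Suc a)))) = bs ! Suc a @ bs ! Suc (Suc a)"
        using frag_split[OF m12, of S] frag_block[of "Suc a" bs] frag_block[of "Suc (Suc a)" bs]
          S b h by simp
      moreover have "sublist (fragment S (?b (Suc a)) (?b (Suc (Suc (Suc a))))) (fragment S i j)"
        using frag_sub[of i _ _ j S] le1 le3 m12 by (meson order_trans)
      ultimately have "sublist (bs ! Suc a @ bs ! Suc (Suc a)) T"
        using ij(3) sublist_order.order_trans by metis
      then show False using mx[of "Suc a"] b h by simp
    qed
    have "j \<le> ?b (Suc b)" using b False ij by linarith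
    then show ?thesis using ab b2 a b by blast
  qed
  have part2: "\<exists>m < ?k. bs ! m \<noteq> [] \<and> i \<le> ?b m \<and> ?b m < i + length u"
    if u: "is_lcs u S T" "i + length u \<le> length S" "fragment S i (i + length u) = u" for u i
  proof -
    have "bs ! 0 \<in> set bs" using kpos by simp
    then have "sublist (bs ! 0) T" "sublist (bs ! 0) S" using blk S
      by (auto simp: sublist_def) (metis concat_append concat.simps(2) append.assoc split_list)
    then have "length (bs ! 0) \<le> length u" using u(1) unfolding is_lcs_def by blast
    then have upos: "length u > 0" using ne[OF kpos] by (metis le_zero_eq length_greater_0_conv neq0_conv)
    then have ilt: "i < length S" using u(2) by linarith
    obtain a where a: "a < ?k" "?b a \<le> i" "i < ?b (Suc a)" using find_block[of i bs] bS ilt by auto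
    show ?thesis
    proof (rule ccontr)
      assume nc: "\<not> ?thesis"
      have ai: "?b a < i" proof (rule ccontr)
        assume "\<not> ?b a < i"
        then have "?b a = i" using a by simp
        then show False using nc a(1) ne[OF a(1)] upos by auto
      qed
      have end1: "i + length u \<le> ?b (Suc a)"
      proof (cases "Suc a < ?k")
        case True
        then show ?thesis using nc a ne[OF True] by (meson less_imp_le not_le)
      next
        case False
        then have "Suc a = ?k" using a by simp
        then show ?thesis using bS u by simp
      qed
      let ?v = "fragment S (?b a) (i + length u)"
      have "sublist ?v (bs ! a)"
        using frag_sub[of "?b a" "?b a" "i + length u" "?b (Suc a)" S] frag_block[OF a(1)] S ai end1
        by simp
      then have "sublist ?v T" using blk a(1) sublist_order.order_trans by (metis nth_mem)
      moreover have "sublist ?v S" by (rule frag_sublist_S)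
      ultimately have "length ?v \<le> length u" using u(1) unfolding is_lcs_def by blast
      moreover have "length ?v = i + length u - ?b a" using frag_len u(2) by blast
      ultimately show False using ai by simp
    qed
  qed
  show ?thesis using part1 part2 by blast
qed

end
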